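(* There is a universal constant $c>0$ such that for all $q\in(0,1/2)$, all $\gamma\in(0,1]$ and $L=\lfloor 1/q^\gamma\rfloor$, with $B=\{\eta\in\Omega_\Lambda:\eta_L=1\}$, $$\frac{c\,q}{C_{\mathbb 10,B}}\le T_{\rm hit}(L)\le\frac{q}{C_{\mathbb 10,B}}.$$
   Context: Fix $q\in(0,1/2)$, $p=1-q$, $\Lambda=\{1,\dots,L\}$, $\Omega_\Lambda=\{0,1\}^\Lambda$, $\pi$ the product measure with $\pi(\sigma_x=1)=p$. The East process has transition rates $K(\sigma,\sigma^x)=c_x(\sigma)[p(1-\sigma_x)+q\sigma_x]$ ($\sigma^x$ = $\sigma$ with spin at $x$ flipped), $c_1\equiv1$, $c_x(\sigma)=1-\sigma_{x-1}$ for $x\ge2$. For disjoint $A,B\subset\Omega_\Lambda$, the capacity is $C_{A,B}=\sum_{a\in A}\pi(a)\mathcal R(a)\mathbb P_a(\tau_A^+>\tau_B)$, where $\mathcal R(a)=\sum_{\sigma\ne a}K(a,\sigma)$, $\tau_B$ is the hitting time of $B$ and $\tau_A^+$ the first return time to $A$ (first time in $A$ after leaving the initial state); $C_{a,B}$ denotes $C_{\{a\},B}$. $\mathbb 10$ has $\sigma_x=1$ for $x<L$, $\sigma_L=0$, and $T_{\rm hit}(L)=\mathbb E_{\mathbb 10}[\tau_{\{\eta_L=1\}}]$. *)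

theory Defs
  imports Complex_Main
begin

text \<open>East process on \<Lambda> = {1..L}. Configurations are functions nat \<Rightarrow> bool
  (True = spin 1) that are False outside {1..L}. The parameter q is the
  density of zeros, p = 1 - q.\<close>

type_synonym config = "nat \<Rightarrow> bool"

definition Omega :: "nat \<Rightarrow> config set" where
  "Omega L = {\<sigma>. \<forall>x. (x < 1 \<or> L < x) \<longrightarrow> \<not> \<sigma> x}"

definition flip :: "config \<Rightarrow> nat \<Rightarrow> config" where
  "flip \<sigma> x = \<sigma>(x := \<not> \<sigma> x)"

definition constr :: "nat \<Rightarrow> config \<Rightarrow> real" where
  "constr x \<sigma> = (if x = 1 then 1 else if \<sigma> (x - 1) then 0 else 1)"

definition K :: "nat \<Rightarrow> real \<Rightarrow> config \<Rightarrow> config \<Rightarrow> real" where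
  "K L q \<sigma> \<eta> = (\<Sum>x\<in>{1..L}. if \<eta> = flip \<sigma> x
       then constr x \<sigma> * (if \<sigma> x then q else 1 - q) else 0)"

definition R :: "nat \<Rightarrow> real \<Rightarrow> config \<Rightarrow> real" where
  "R L q \<sigma> = (\<Sum>\<eta>\<in>Omega L - {\<sigma>}. K L q \<sigma> \<eta>)"

definition pi_east :: "nat \<Rightarrow> real \<Rightarrow> config \<Rightarrow> real" where
  "pi_east L q \<sigma> = (\<Prod>x\<in>{1..L}. if \<sigma> x then 1 - q else q)"

definition paths :: "nat \<Rightarrow> nat \<Rightarrow> config list set" where
  "paths L n = {xs. length xs = n \<and> set xs \<subseteq> Omega L}"

definition path_prob :: "nat \<Rightarrow> real \<Rightarrow> config list \<Rightarrow> real" where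
  "path_prob L q xs = (\<Prod>i<length xs - 1. K L q (xs ! i) (xs ! Suc i) / R L q (xs ! i))"

text \<open>P_a(\<tau>_A^+ > \<tau>_B) for a \<in> A, A, B disjoint: the jump chain started at a
  reaches B at step n+1 without visiting A \<union> B at steps 1..n.\<close>
definition escape_prob :: "nat \<Rightarrow> real \<Rightarrow> config \<Rightarrow> config set \<Rightarrow> config set \<Rightarrow> real" where
  "escape_prob L q a A B = (\<Sum>n. \<Sum>ys\<in>paths L (Suc n).
      (let xs = a # ys in
        if xs ! Suc n \<in> B \<and> (\<forall>i\<in>{1..n}. xs ! i \<notin> A \<union> B) then path_prob L q xs else 0))"

definition capacity :: "nat \<Rightarrow> real \<Rightarrow> config set \<Rightarrow> config set \<Rightarrow> real" where
  "capacity L q A B = (\<Sum>a\<in>A. pi_east L q a * R L q a * escape_prob L q a A B)"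

text \<open>E_a[\<tau>_B] for the continuous-time chain: sum over the jump-chain paths
  first entering B at step n+1 of the path probability times the expected
  total holding time 1/R(x_0)+...+1/R(x_n) spent before entering B.
  (It is 0 if a \<in> B.)\<close>
definition exp_hit :: "nat \<Rightarrow> real \<Rightarrow> config \<Rightarrow> config set \<Rightarrow> real" where
  "exp_hit L q a B = (\<Sum>n. \<Sum>ys\<in>paths L (Suc n).
      (let xs = a # ys in
        if xs ! Suc n \<in> B \<and> (\<forall>i\<le>n. xs ! i \<notin> B)
        then path_prob L q xs * (\<Sum>i\<le>n. 1 / R L q (xs ! i)) else 0))"

definition one_zero :: "nat \<Rightarrow> config" where
  "one_zero L = (\<lambda>x. 1 \<le> x \<and> x < L)"

definition B_set :: "nat \<Rightarrow> config set" where
  "B_set L = {\<eta> \<in> Omega L. \<eta> L}"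

definition T_hit :: "nat \<Rightarrow> real \<Rightarrow> real" where
  "T_hit L q = exp_hit L q (one_zero L) (B_set L)"

end

theory Submission
  imports Defs
begin


lemma Omega_0: "Omega 0 = {\<lambda>_. False}"
  unfolding Omega_def by (auto simp: fun_eq_iff)

lemma Omega_upd_False: assumes "x \<in> Omega (Suc L)" shows "x(Suc L := False) \<in> Omega L"
  unfolding Omega_def mem_Collect_eq
proof (intro allI impI)
  fix i assume i: "i < 1 \<or> L < i"
  show "\<not> (x(Suc L := False)) i"
  proof (cases "i = Suc L")
    case False
    then have "i < 1 \<or> Suc L < i" using i by linarith
    then show ?thesis using assms False unfolding Omega_def by (simp del: One_nat_def) blast
  qed simp
qed

lemma Omega_Suc: "Omega (Suc L) = Omega L \<union> (\<lambda>x. x(Suc L := True)) ` Omega L"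
proof
  show "Omega (Suc L) \<subseteq> Omega L \<union> (\<lambda>x. x(Suc L := True)) ` Omega L"
  proof
    fix x assume x: "x \<in> Omega (Suc L)"
    show "x \<in> Omega L \<union> (\<lambda>x. x(Suc L := True)) ` Omega L"
    proof (cases "x (Suc L)")
      case True
      have "x = (x(Suc L := False))(Suc L := True)" using True by (auto simp: fun_eq_iff)
      moreover have "x(Suc L := False) \<in> Omega L" using x by (rule Omega_upd_False)
      ultimately show ?thesis by blast
    next
      case False
      then have "x \<in> Omega L" using x unfolding Omega_def using Suc_lessI by blast
      then show ?thesis by blast
    qed
  qed
next
  show "Omega L \<union> (\<lambda>x. x(Suc L := True)) ` Omega L \<subseteq> Omega (Suc L)"
    unfolding Omega_def by auto
qed

lemma finite_Omega: "finite (Omega L)"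
  by (induction L) (auto simp: Omega_0 Omega_Suc)

lemma Omega_Suc_disj: "Omega L \<inter> (\<lambda>x. x(Suc L := True)) ` Omega L = {}"
  unfolding Omega_def by auto

lemma pi_Suc: "x \<in> Omega (Suc L) \<Longrightarrow>
   pi_east (Suc L) q x = pi_east L q x * (if x (Suc L) then 1 - q else q)"
  unfolding pi_east_def by (simp add: atLeastAtMostSuc_conv mult.commute)

lemma pi_upd: "x \<in> Omega L \<Longrightarrow> pi_east L q (x(Suc L := True)) = pi_east L q x"
  unfolding pi_east_def by (intro prod.cong) auto

lemma pi_sum: "(\<Sum>x\<in>Omega L. pi_east L q x) = 1"
proof (induction L)
  case 0 thus ?case by (simp add: Omega_0 pi_east_def)
next
  case (Suc L)
  have inj: "inj_on (\<lambda>x. x(Suc L := True)) (Omega L)"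
  proof (rule inj_onI)
    fix x y assume x: "x \<in> Omega L" and y: "y \<in> Omega L" and e: "x(Suc L := True) = y(Suc L := True)"
    show "x = y"
    proof
      fix i show "x i = y i"
      proof (cases "i = Suc L")
        case True then have "\<not> x i" "\<not> y i" using x y unfolding Omega_def by auto
        then show ?thesis by simp
      next
        case False then show ?thesis using fun_cong[OF e, of i] by simp
      qed
    qed
  qed
  have a: "x \<in> Omega L \<Longrightarrow> \<not> x (Suc L)" for x unfolding Omega_def by auto
  have "(\<Sum>x\<in>Omega (Suc L). pi_east (Suc L) q x) =
     (\<Sum>x\<in>Omega L. pi_east (Suc L) q x) + (\<Sum>x\<in>(\<lambda>x. x(Suc L := True)) ` Omega L. pi_east (Suc L) q x)"
    unfolding Omega_Suc by (rule sum.union_disjoint) (auto simp: finite_Omega Omega_Suc_disj)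
  also have "(\<Sum>x\<in>Omega L. pi_east (Suc L) q x) = (\<Sum>x\<in>Omega L. pi_east L q x * q)"
    by (intro sum.cong refl, subst pi_Suc) (auto simp: Omega_Suc a)
  also have "(\<Sum>x\<in>(\<lambda>x. x(Suc L := True)) ` Omega L. pi_east (Suc L) q x)
      = (\<Sum>x\<in>Omega L. pi_east (Suc L) q (x(Suc L := True)))"
    by (rule sum.reindex[OF inj, unfolded comp_def])
  also have "\<dots> = (\<Sum>x\<in>Omega L. pi_east L q x * (1 - q))"
    by (intro sum.cong refl, subst pi_Suc) (auto simp: Omega_Suc pi_upd)
  also have "(\<Sum>x\<in>Omega L. pi_east L q x * q) + (\<Sum>x\<in>Omega L. pi_east L q x * (1 - q)) = (\<Sum>x\<in>Omega L. pi_east L q x)"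
    by (subst sum.distrib[symmetric]) (simp add: algebra_simps)
  finally show ?case using Suc by simp
qed

lemma pi_D: "(\<Sum>x\<in>Omega (Suc L). if x (Suc L) then 0 else pi_east (Suc L) q x) = q"
proof -
  have a: "x \<in> Omega L \<Longrightarrow> \<not> x (Suc L)" for x unfolding Omega_def by auto
  have "(\<Sum>x\<in>Omega (Suc L). if x (Suc L) then 0 else pi_east (Suc L) q x) =
     (\<Sum>x\<in>Omega L. if x (Suc L) then 0 else pi_east (Suc L) q x) + (\<Sum>x\<in>(\<lambda>x. x(Suc L := True)) ` Omega L. if x (Suc L) then 0 else pi_east (Suc L) q x)"
    unfolding Omega_Suc by (rule sum.union_disjoint) (auto simp: finite_Omega Omega_Suc_disj)
  also have "(\<Sum>x\<in>(\<lambda>x. x(Suc L := True)) ` Omega L. if x (Suc L) then 0 else pi_east (Suc L) q x) = 0"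
    by (intro sum.neutral) auto
  also have "(\<Sum>x\<in>Omega L. if x (Suc L) then 0 else pi_east (Suc L) q x) = (\<Sum>x\<in>Omega L. pi_east L q x * q)"
    by (intro sum.cong refl, subst pi_Suc) (auto simp: Omega_Suc a)
  finally show ?thesis by (simp add: sum_distrib_right[symmetric] pi_sum)
qed

lemma finite_paths: "finite (paths L n)"
  unfolding paths_def using finite_lists_length_eq[OF finite_Omega] by (simp add: conj_commute)

lemma paths_Suc: "paths L (Suc n) = (\<lambda>(z,ys). z # ys) ` (Omega L \<times> paths L n)"
  unfolding paths_def by (auto simp: length_Suc_conv image_iff)

lemma sum_paths_Suc: "(\<Sum>ys\<in>paths L (Suc n). F ys) = (\<Sum>z\<in>Omega L. \<Sum>ys\<in>paths L n. F (z # ys))"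
proof -
  have "inj_on (\<lambda>(z,ys). z # ys) (Omega L \<times> paths L n)" by (auto simp: inj_on_def)
  then have "(\<Sum>ys\<in>paths L (Suc n). F ys) = (\<Sum>(z,ys)\<in>Omega L \<times> paths L n. F (z # ys))"
    unfolding paths_Suc by (subst sum.reindex) (auto simp: case_prod_beta comp_def)
  also have "\<dots> = (\<Sum>z\<in>Omega L. \<Sum>ys\<in>paths L n. F (z # ys))"
    by (rule sum.cartesian_product[symmetric])
  finally show ?thesis .
qed

lemma paths_0: "paths L 0 = {[]}" unfolding paths_def by auto

lemma path_prob_Cons2: "path_prob L q (x # z # ys) = K L q x z / R L q x * path_prob L q (z # ys)"
proof -
  have e: "length (x#z#ys) - 1 = Suc (length (z#ys) - 1)" by simp
  show ?thesis unfolding path_prob_def e prod.lessThan_Suc_shift by simp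
qed

lemma path_prob_single: "path_prob L q [x] = 1"
  unfolding path_prob_def by simp



definition rt :: "real \<Rightarrow> nat \<Rightarrow> config \<Rightarrow> real" where
  "rt q k x = constr k x * (if x k then q else 1 - q)"

lemma flip_in: "x \<in> Omega L \<Longrightarrow> k \<in> {1..L} \<Longrightarrow> flip x k \<in> Omega L"
  unfolding Omega_def flip_def by auto

lemma flip_neq: "flip x k \<noteq> x"
  unfolding flip_def by (metis fun_upd_same)

lemma flip_flip: "flip (flip x k) k = x"
  unfolding flip_def by auto

lemma flip_inj: "flip x k = flip x k' \<Longrightarrow> k = k'"
  unfolding flip_def by (metis fun_upd_apply)

lemma flip_eq_iff: "(y = flip x k) = (x = flip y k)"
  using flip_flip by metis

lemma K_flip: "k \<in> {1..L} \<Longrightarrow> K L q x (flip x k) = rt q k x"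
proof -
  assume k: "k \<in> {1..L}"
  have "K L q x (flip x k) = (\<Sum>j\<in>{1..L}. if j = k then rt q j x else 0)"
    unfolding K_def rt_def by (intro sum.cong refl) (auto dest: flip_inj)
  also have "\<dots> = rt q k x" using k by simp
  finally show ?thesis .
qed

lemma K_notflip: "(\<forall>k\<in>{1..L}. y \<noteq> flip x k) \<Longrightarrow> K L q x y = 0"
  unfolding K_def by (intro sum.neutral) auto

lemma K_self: "K L q x x = 0"
  using K_notflip flip_neq by metis

lemma sumK: assumes x: "x \<in> Omega L"
  shows "(\<Sum>y\<in>Omega L. K L q x y * f y) = (\<Sum>k\<in>{1..L}. rt q k x * f (flip x k))"
proof -
  have "(\<Sum>y\<in>Omega L. K L q x y * f y) = (\<Sum>y\<in>Omega L. \<Sum>k\<in>{1..L}. if y = flip x k then rt q k x * f (flip x k) else 0)"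
    unfolding K_def rt_def sum_distrib_right by (intro sum.cong refl) auto
  also have "\<dots> = (\<Sum>k\<in>{1..L}. \<Sum>y\<in>Omega L. if y = flip x k then rt q k x * f (flip x k) else 0)"
    by (rule sum.swap)
  also have "\<dots> = (\<Sum>k\<in>{1..L}. rt q k x * f (flip x k))"
    using x flip_in by (intro sum.cong refl) (simp add: finite_Omega)
  finally show ?thesis .
qed

lemma R_sumK: assumes x: "x \<in> Omega L" shows "R L q x = (\<Sum>y\<in>Omega L. K L q x y)"
proof -
  have "(\<Sum>y\<in>Omega L. K L q x y) = K L q x x + (\<Sum>y\<in>Omega L - {x}. K L q x y)"
    using x by (simp add: finite_Omega sum.remove)
  then show ?thesis unfolding R_def by (simp add: K_self)
qed

lemma R_eq: "x \<in> Omega L \<Longrightarrow> R L q x = (\<Sum>k\<in>{1..L}. rt q k x)"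
  using sumK[of x L q "\<lambda>_. 1"] R_sumK by simp

lemma constr_flip: "1 \<le> k \<Longrightarrow> constr k (flip x k) = constr k x"
  unfolding constr_def flip_def by auto

lemma constr_01: "0 \<le> constr k x" "constr k x \<le> 1"
  unfolding constr_def by auto

lemma pi_split: "k \<in> {1..L} \<Longrightarrow> pi_east L q x = (if x k then 1 - q else q) * (\<Prod>j\<in>{1..L}-{k}. if x j then 1 - q else q)"
  unfolding pi_east_def by (simp add: prod.remove)

lemma pi_rest_flip: "(\<Prod>j\<in>{1..L}-{k}. if (flip x k) j then 1 - q else q) = (\<Prod>j\<in>{1..L}-{k}. if x j then 1 - q else q)"
  unfolding flip_def by (intro prod.cong) auto

lemma detailed_balance: "pi_east L q x * K L q x y = pi_east L q y * K L q y x"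
proof (cases "\<exists>k\<in>{1..L}. y = flip x k")
  case True
  then obtain k where k: "k \<in> {1..L}" and y: "y = flip x k" by blast
  then have x: "x = flip y k" by (simp add: flip_flip)
  have "pi_east L q x * K L q x y = (if x k then 1 - q else q) * (\<Prod>j\<in>{1..L}-{k}. if x j then 1 - q else q) * (constr k x * (if x k then q else 1 - q))"
    using k y by (simp add: K_flip pi_split[OF k] rt_def)
  also have "\<dots> = (\<Prod>j\<in>{1..L}-{k}. if x j then 1 - q else q) * constr k x * (q * (1 - q))"
    by (simp add: algebra_simps)
  finally have 1: "pi_east L q x * K L q x y = (\<Prod>j\<in>{1..L}-{k}. if x j then 1 - q else q) * constr k x * (q * (1 - q))" .
  have "pi_east L q y * K L q y x = (if y k then 1 - q else q) * (\<Prod>j\<in>{1..L}-{k}. if y j then 1 - q else q) * (constr k y * (if y k then q else 1 - q))"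
    using k x by (simp add: K_flip pi_split[OF k] rt_def)
  also have "\<dots> = (\<Prod>j\<in>{1..L}-{k}. if y j then 1 - q else q) * constr k y * (q * (1 - q))"
    by (simp add: algebra_simps)
  finally have 2: "pi_east L q y * K L q y x = (\<Prod>j\<in>{1..L}-{k}. if y j then 1 - q else q) * constr k y * (q * (1 - q))" .
  have 3: "(\<Prod>j\<in>{1..L}-{k}. if y j then 1 - q else q) = (\<Prod>j\<in>{1..L}-{k}. if x j then 1 - q else q)"
    unfolding y by (rule pi_rest_flip)
  have 4: "constr k y = constr k x" unfolding y using k by (simp add: constr_flip)
  show ?thesis unfolding 1 2 3 4 ..
next
  case False
  then have "\<forall>k\<in>{1..L}. x \<noteq> flip y k" by (metis flip_flip)
  with False show ?thesis by (simp add: K_notflip)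
qed



definition P :: "nat \<Rightarrow> real \<Rightarrow> config \<Rightarrow> config \<Rightarrow> real" where
  "P L q x z = K L q x z / R L q x"

definition SS :: "nat \<Rightarrow> real \<Rightarrow> config set \<Rightarrow> nat \<Rightarrow> config \<Rightarrow> real" where
 "SS L q B n x = (\<Sum>ys\<in>paths L n. if (\<forall>i\<le>n. (x#ys)!i \<notin> B) then path_prob L q (x#ys) else 0)"
definition HH :: "nat \<Rightarrow> real \<Rightarrow> config set \<Rightarrow> nat \<Rightarrow> config \<Rightarrow> real" where
 "HH L q B n x = (\<Sum>ys\<in>paths L (Suc n). if (x#ys)!Suc n \<in> B \<and> (\<forall>i\<le>n. (x#ys)!i \<notin> B) then path_prob L q (x#ys) else 0)"
definition WW :: "nat \<Rightarrow> real \<Rightarrow> config set \<Rightarrow> nat \<Rightarrow> config \<Rightarrow> real" where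
 "WW L q B n x = (\<Sum>ys\<in>paths L (Suc n). if (x#ys)!Suc n \<in> B \<and> (\<forall>i\<le>n. (x#ys)!i \<notin> B)
     then path_prob L q (x#ys) * (\<Sum>i\<le>n. 1 / R L q ((x#ys)!i)) else 0)"
definition EE :: "nat \<Rightarrow> real \<Rightarrow> config set \<Rightarrow> config set \<Rightarrow> nat \<Rightarrow> config \<Rightarrow> real" where
 "EE L q A B n x = (\<Sum>ys\<in>paths L (Suc n). if (x#ys)!Suc n \<in> B \<and> (\<forall>i\<in>{1..n}. (x#ys)!i \<notin> A \<union> B) then path_prob L q (x#ys) else 0)"

lemma exp_hit_WW: "exp_hit L q a B = (\<Sum>n. WW L q B n a)"
  unfolding exp_hit_def WW_def Let_def ..
lemma escape_EE: "escape_prob L q a A B = (\<Sum>n. EE L q A B n a)"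
  unfolding escape_prob_def EE_def Let_def ..

lemma all_le_Suc: "(\<forall>i\<le>Suc n. Q i) \<longleftrightarrow> Q 0 \<and> (\<forall>i\<le>n. Q (Suc i))"
proof
  assume h: "\<forall>i\<le>Suc n. Q i" then show "Q 0 \<and> (\<forall>i\<le>n. Q (Suc i))" by simp
next
  assume h: "Q 0 \<and> (\<forall>i\<le>n. Q (Suc i))"
  show "\<forall>i\<le>Suc n. Q i"
  proof (intro allI impI)
    fix i assume "i \<le> Suc n" then show "Q i" using h by (cases i) auto
  qed
qed

lemma all_1_Suc: "(\<forall>i\<in>{1..Suc n}. Q i) \<longleftrightarrow> Q 1 \<and> (\<forall>i\<in>{1..n}. Q (Suc i))"
proof
  assume h: "\<forall>i\<in>{1..Suc n}. Q i" then show "Q 1 \<and> (\<forall>i\<in>{1..n}. Q (Suc i))" by simp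
next
  assume h: "Q 1 \<and> (\<forall>i\<in>{1..n}. Q (Suc i))"
  show "\<forall>i\<in>{1..Suc n}. Q i"
  proof
    fix i assume i: "i \<in> {1..Suc n}"
    then obtain j where j: "i = Suc j" "j \<le> n" by (cases i) auto
    show "Q i"
    proof (cases "j = 0")
      case True then show ?thesis using h j by simp
    next
      case False then show ?thesis using h j by simp
    qed
  qed
qed

lemma all_le_0: "(\<forall>i\<le>n. (x#ys)!i \<notin> B) \<Longrightarrow> x \<notin> B"
  by (drule spec[of _ 0]) simp

lemma path_prob_pair: "path_prob L q [x, z] = P L q x z"
  using path_prob_Cons2[of L q x z "[]"] by (simp add: path_prob_single P_def)

lemma SS_0: "SS L q B 0 x = (if x \<in> B then 0 else 1)"
  unfolding SS_def paths_0 by (simp add: path_prob_single)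

lemma SS_Suc: "SS L q B (Suc n) x = (if x \<in> B then 0 else \<Sum>z\<in>Omega L. P L q x z * SS L q B n z)"
proof (cases "x \<in> B")
  case True then show ?thesis unfolding SS_def by (auto intro!: sum.neutral dest: all_le_0)
next
  case False then show ?thesis
    unfolding SS_def sum_paths_Suc by (simp add: all_le_Suc path_prob_Cons2 sum_distrib_left P_def if_distrib cong: if_cong)
qed

lemma HH_0: "HH L q B 0 x = (if x \<in> B then 0 else \<Sum>z\<in>Omega L. if z \<in> B then P L q x z else 0)"
  unfolding HH_def sum_paths_Suc paths_0 by (auto simp: path_prob_pair intro!: sum.cong)

lemma HH_Suc: "HH L q B (Suc n) x = (if x \<in> B then 0 else \<Sum>z\<in>Omega L. P L q x z * HH L q B n z)"
proof (cases "x \<in> B")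
  case True then show ?thesis unfolding HH_def by (auto intro!: sum.neutral dest: all_le_0)
next
  case False then show ?thesis
    unfolding HH_def sum_paths_Suc[where n="Suc n"] by (simp add: all_le_Suc path_prob_Cons2 sum_distrib_left P_def if_distrib cong: if_cong)
qed

lemma WW_0: "WW L q B 0 x = 1 / R L q x * HH L q B 0 x"
  unfolding WW_def HH_def sum_distrib_left by (intro sum.cong refl) auto

lemma WW_Suc: "WW L q B (Suc n) x = 1 / R L q x * HH L q B (Suc n) x +
   (if x \<in> B then 0 else \<Sum>z\<in>Omega L. P L q x z * WW L q B n z)"
proof (cases "x \<in> B")
  case True
  have "HH L q B (Suc n) x = 0" "WW L q B (Suc n) x = 0" unfolding HH_def WW_def using True
    by (auto intro!: sum.neutral dest: all_le_0)
  then show ?thesis using True by simp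
next
  case False
  have "WW L q B (Suc n) x = (\<Sum>z\<in>Omega L. \<Sum>ys\<in>paths L (Suc n).
     1 / R L q x * (if (z#ys)!Suc n \<in> B \<and> (\<forall>i\<le>n. (z#ys)!i \<notin> B) then P L q x z * path_prob L q (z#ys) else 0)
     + P L q x z * (if (z#ys)!Suc n \<in> B \<and> (\<forall>i\<le>n. (z#ys)!i \<notin> B) then path_prob L q (z#ys) * (\<Sum>i\<le>n. 1 / R L q ((z#ys)!i)) else 0))"
    unfolding WW_def sum_paths_Suc[where n="Suc n"] sum.atMost_Suc_shift all_le_Suc using False
    apply (intro sum.cong refl)
    subgoal for z ys by (cases "(z#ys)!Suc n \<in> B \<and> (\<forall>i\<le>n. (z#ys)!i \<notin> B)")
       (auto simp add: path_prob_Cons2 P_def algebra_simps del: nth_Cons_Suc)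
    done
  also have "\<dots> = 1 / R L q x * HH L q B (Suc n) x + (\<Sum>z\<in>Omega L. P L q x z * WW L q B n z)"
    unfolding HH_def WW_def sum_paths_Suc[where n="Suc n"] sum.distrib sum_distrib_left using False
    by (simp add: all_le_Suc path_prob_Cons2 P_def if_distrib cong: if_cong)
  finally show ?thesis using False by simp
qed

lemma EE_0: "EE L q A B 0 x = (\<Sum>z\<in>Omega L. if z \<in> B then P L q x z else 0)"
  unfolding EE_def sum_paths_Suc paths_0 by (auto simp: path_prob_pair intro!: sum.cong)

lemma EE_Suc: "EE L q A B (Suc n) x = (\<Sum>z\<in>Omega L. if z \<in> A \<union> B then 0 else P L q x z * EE L q A B n z)"
  unfolding EE_def sum_paths_Suc[where n="Suc n"] all_1_Suc
  apply (intro sum.cong refl)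
  subgoal for z by (cases "z \<in> A \<union> B") (simp_all add: path_prob_Cons2 sum_distrib_left P_def if_distrib cong: if_cong)
  done



lemma rt_nonneg: "0 \<le> q \<Longrightarrow> q \<le> 1 \<Longrightarrow> 0 \<le> rt q k x"
  unfolding rt_def constr_def by auto
lemma rt_le1: "0 \<le> q \<Longrightarrow> q \<le> 1 \<Longrightarrow> rt q k x \<le> 1"
  unfolding rt_def constr_def by auto

lemma K_nonneg: "0 \<le> q \<Longrightarrow> q \<le> 1 \<Longrightarrow> 0 \<le> K L q x y"
  unfolding K_def by (intro sum_nonneg) (auto simp: constr_def)

lemma R_nonneg: "0 \<le> q \<Longrightarrow> q \<le> 1 \<Longrightarrow> 0 \<le> R L q x"
  unfolding R_def by (intro sum_nonneg K_nonneg)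

lemma P_nonneg: "0 \<le> q \<Longrightarrow> q \<le> 1 \<Longrightarrow> 0 \<le> P L q x y"
  unfolding P_def by (intro divide_nonneg_nonneg K_nonneg R_nonneg)

lemma pp_nonneg: "0 \<le> q \<Longrightarrow> q \<le> 1 \<Longrightarrow> 0 \<le> path_prob L q xs"
  unfolding path_prob_def by (intro prod_nonneg ballI divide_nonneg_nonneg K_nonneg R_nonneg)

lemma in_B: "x \<in> Omega L \<Longrightarrow> (x \<in> B_set L) = x L"
  unfolding B_set_def by simp

context
  fixes L :: nat and q :: real
  assumes q0: "0 < q" and q1: "q < 1/2" and L1: "1 \<le> L"
begin

lemma qle1: "q \<le> 1" using q1 by simp

lemma R_ge: assumes x: "x \<in> Omega L" shows "q \<le> R L q x"
proof -
  have "rt q 1 x \<le> (\<Sum>k\<in>{1..L}. rt q k x)"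
    using L1 by (intro member_le_sum rt_nonneg) (auto simp: q0 qle1 less_imp_le)
  moreover have "q \<le> rt q 1 x" unfolding rt_def constr_def using q1 by auto
  ultimately show ?thesis using R_eq[OF x] by simp
qed

lemma R_pos: "x \<in> Omega L \<Longrightarrow> 0 < R L q x" using R_ge q0 by force

lemma R_le: assumes x: "x \<in> Omega L" shows "R L q x \<le> real L"
proof -
  have "(\<Sum>k\<in>{1..L}. rt q k x) \<le> (\<Sum>k\<in>{1..L}. 1)"
    by (intro sum_mono rt_le1) (auto simp: q0 qle1 less_imp_le)
  then show ?thesis using R_eq[OF x] by simp
qed

lemma sumP: assumes x: "x \<in> Omega L" shows "(\<Sum>z\<in>Omega L. P L q x z) = 1"
proof -
  have "(\<Sum>z\<in>Omega L. P L q x z) = (\<Sum>z\<in>Omega L. K L q x z) / R L q x"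
    unfolding P_def by (simp add: sum_divide_distrib)
  then show ?thesis using R_sumK[OF x] R_pos[OF x] by simp
qed

lemma Pnn: "0 \<le> P L q x y" using P_nonneg q0 qle1 by simp
lemma ppnn: "0 \<le> path_prob L q xs" using pp_nonneg q0 qle1 by simp

lemma SS_nonneg: "0 \<le> SS L q B n x"
  unfolding SS_def by (intro sum_nonneg) (simp add: ppnn)
lemma HH_nonneg: "0 \<le> HH L q B n x"
  unfolding HH_def by (intro sum_nonneg) (simp add: ppnn)
lemma WW_nonneg: "0 \<le> WW L q B n x"
  unfolding WW_def by (intro sum_nonneg) (auto intro!: mult_nonneg_nonneg sum_nonneg ppnn simp: R_nonneg q0 qle1 less_imp_le)
lemma EE_nonneg: "0 \<le> EE L q A B n x"
  unfolding EE_def by (intro sum_nonneg) (simp add: ppnn)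

lemma SS_le1: "x \<in> Omega L \<Longrightarrow> SS L q B n x \<le> 1"
proof (induction n arbitrary: x)
  case 0 then show ?case by (simp add: SS_0)
next
  case (Suc n)
  have "(\<Sum>z\<in>Omega L. P L q x z * SS L q B n z) \<le> (\<Sum>z\<in>Omega L. P L q x z)"
    using Suc.IH by (intro sum_mono) (simp add: Pnn mult_left_le)
  then show ?case using sumP[OF Suc.prems] by (simp add: SS_Suc)
qed

lemma HH_SS: "x \<in> Omega L \<Longrightarrow> HH L q B n x + SS L q B (Suc n) x = SS L q B n x"
proof (induction n arbitrary: x)
  case 0
  show ?case
  proof (cases "x \<in> B")
    case False
    have "HH L q B 0 x + SS L q B (Suc 0) x = (\<Sum>z\<in>Omega L. P L q x z)"
      using False by (simp add: HH_0 SS_Suc SS_0 sum.distrib[symmetric] if_distrib cong: if_cong)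
    then show ?thesis using sumP[OF 0] False by (simp add: SS_0)
  qed (simp add: HH_0 SS_Suc SS_0)
next
  case (Suc n)
  show ?case
  proof (cases "x \<in> B")
    case False
    have "HH L q B (Suc n) x + SS L q B (Suc (Suc n)) x = (\<Sum>z\<in>Omega L. P L q x z * (HH L q B n z + SS L q B (Suc n) z))"
      using False by (simp add: HH_Suc SS_Suc[of _ _ _ "Suc n"] sum.distrib[symmetric] algebra_simps)
    also have "\<dots> = (\<Sum>z\<in>Omega L. P L q x z * SS L q B n z)"
      using Suc.IH by (intro sum.cong refl) simp
    finally show ?thesis using False by (simp add: SS_Suc[of _ _ _ n])
  qed (simp add: HH_Suc SS_Suc)
qed

lemma HH_le_SS: "x \<in> Omega L \<Longrightarrow> HH L q B n x \<le> SS L q B n x"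
  using HH_SS[of x B n] SS_nonneg[of B "Suc n" x] by linarith

lemma SS_mono: "x \<in> Omega L \<Longrightarrow> SS L q B (m + d) x \<le> SS L q B m x"
proof (induction d)
  case (Suc d)
  have "SS L q B (Suc (m + d)) x \<le> SS L q B (m + d) x"
    using HH_SS[OF Suc.prems, of B "m+d"] HH_nonneg[of B "m+d" x] by linarith
  then show ?case using Suc by simp
qed simp

lemma SS_submult:
  assumes b: "\<And>x. x \<in> Omega L \<Longrightarrow> SS L q B N x \<le> \<beta>"
  shows "x \<in> Omega L \<Longrightarrow> SS L q B (k + N) x \<le> \<beta> * SS L q B k x"
proof (induction k arbitrary: x)
  case 0
  show ?case
  proof (cases "x \<in> B")
    case True
    then have "SS L q B N x = 0"
      by (cases N) (simp_all add: SS_Suc SS_0)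
    then show ?thesis using True by (simp add: SS_0)
  qed (use b 0 in \<open>simp add: SS_0\<close>)
next
  case (Suc k)
  show ?case
  proof (cases "x \<in> B")
    case False
    have "SS L q B (Suc k + N) x = (\<Sum>z\<in>Omega L. P L q x z * SS L q B (k + N) z)"
      using False by (simp add: SS_Suc)
    also have "\<dots> \<le> (\<Sum>z\<in>Omega L. P L q x z * (\<beta> * SS L q B k z))"
      using Suc.IH by (intro sum_mono mult_left_mono) (simp_all add: Pnn)
    also have "\<dots> = \<beta> * SS L q B (Suc k) x" using False
      by (simp add: SS_Suc sum_distrib_left algebra_simps)
    finally show ?thesis .
  qed (simp add: SS_Suc)
qed

end


definition mm :: "nat \<Rightarrow> config \<Rightarrow> nat" where
  "mm L x = card {k\<in>{1..<L}. x k}"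

lemma Omega_0_false: "x \<in> Omega L \<Longrightarrow> \<not> x 0"
  unfolding Omega_def by simp

context
  fixes L :: nat and q :: real
  assumes q0: "0 < q" and q1: "q < 1/2" and L1: "1 \<le> L"
begin

lemma good_neighbor:
  assumes x: "x \<in> Omega L" and xL: "\<not> x L"
  shows "\<exists>k\<in>{1..L}. q \<le> rt q k x \<and> ((flip x k) L \<or> mm L (flip x k) < mm L x)"
proof (cases "\<exists>j. j\<in>{1..<L} \<and> x j")
  case True
  then obtain j where j: "j \<in> {1..<L}" "x j" by blast
  define k where "k = (LEAST i. x i)"
  have xk: "x k" unfolding k_def using j by (metis LeastI)
  have kj: "k \<le> j" unfolding k_def using j by (simp add: Least_le)
  have k1: "1 \<le> k" using xk Omega_0_false[OF x] by (cases k) auto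
  have notbelow: "\<not> x (k - 1)" if "k \<noteq> 1"
  proof -
    have "k - 1 < k" using k1 by simp
    then show ?thesis unfolding k_def by (rule not_less_Least)
  qed
  have c: "constr k x = 1" unfolding constr_def using notbelow by auto
  have r: "rt q k x = q" unfolding rt_def c using xk by simp
  have kL: "k \<in> {1..<L}" using j kj k1 by auto
  have e: "{i\<in>{1..<L}. flip x k i} = {i\<in>{1..<L}. x i} - {k}"
    unfolding flip_def using xk by auto
  have fin: "finite {i\<in>{1..<L}. x i}" by simp
  have "k \<in> {i\<in>{1..<L}. x i}" using kL xk by simp
  then have "card ({i\<in>{1..<L}. x i} - {k}) < card {i\<in>{1..<L}. x i}" by (rule card_Diff1_less[OF fin])
  then have "mm L (flip x k) < mm L x" unfolding mm_def e .
  then show ?thesis using r kL by (intro bexI[of _ k]) auto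
next
  case False
  have c: "constr L x = 1" unfolding constr_def using False L1 by auto
  have "rt q L x = 1 - q" unfolding rt_def c using xL by simp
  then have "q \<le> rt q L x" using q1 by simp
  moreover have "(flip x L) L" unfolding flip_def using xL by simp
  ultimately show ?thesis using L1 by (intro bexI[of _ L]) auto
qed

lemma step_bound:
  assumes x: "x \<in> Omega L" and xB: "x \<notin> B" and z0: "z0 \<in> Omega L"
    and s: "SS L q B n z0 \<le> 1 - t" and t: "0 \<le> t" and d: "\<delta> \<le> P L q x z0"
  shows "SS L q B (Suc n) x \<le> 1 - \<delta> * t"
proof -
  have "SS L q B (Suc n) x = P L q x z0 * SS L q B n z0 + (\<Sum>z\<in>Omega L - {z0}. P L q x z * SS L q B n z)"
    using xB z0 by (simp add: SS_Suc sum.remove finite_Omega)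
  also have "(\<Sum>z\<in>Omega L - {z0}. P L q x z * SS L q B n z) \<le> (\<Sum>z\<in>Omega L - {z0}. P L q x z)"
    using SS_le1[OF q0 q1 L1] by (intro sum_mono) (simp add: Pnn[OF q0 q1 L1] mult_left_le)
  also have "(\<Sum>z\<in>Omega L - {z0}. P L q x z) = 1 - P L q x z0"
    using sumP[OF q0 q1 L1 x] z0 by (simp add: sum.remove finite_Omega)
  finally have "SS L q B (Suc n) x \<le> P L q x z0 * SS L q B n z0 + (1 - P L q x z0)" by simp
  also have "\<dots> \<le> P L q x z0 * (1 - t) + (1 - P L q x z0)"
    using s Pnn[OF q0 q1 L1] by (simp add: mult_left_mono)
  also have "\<dots> = 1 - P L q x z0 * t" by (simp add: algebra_simps)
  also have "\<dots> \<le> 1 - \<delta> * t" using d t by (simp add: mult_right_mono)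
  finally show ?thesis .
qed

definition "\<delta>0 = q / real L"

lemma delta_pos: "0 < \<delta>0" "\<delta>0 \<le> 1" "\<delta>0 < 1"
  unfolding \<delta>0_def using q0 q1 L1 by (auto simp: divide_simps)

lemma SS_B: "x \<in> B_set L \<Longrightarrow> SS L q (B_set L) n x = 0"
  by (cases n) (simp_all add: SS_0 SS_Suc)

lemma decay_aux: "x \<in> Omega L \<Longrightarrow> mm L x \<le> j \<Longrightarrow> SS L q (B_set L) (Suc j) x \<le> 1 - \<delta>0 ^ Suc j"
proof (induction j arbitrary: x)
  case (0 x)
  show ?case
  proof (cases "x \<in> B_set L")
    case True then show ?thesis using SS_B delta_pos by simp
  next
    case False
    then have xL: "\<not> x L" using in_B[OF "0.prems"(1)] by simp
    from good_neighbor[OF "0.prems"(1) xL] obtain k where k: "k \<in> {1..L}" "q \<le> rt q k x"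
      "(flip x k) L \<or> mm L (flip x k) < mm L x" by blast
    have z0: "flip x k \<in> Omega L" using flip_in[OF "0.prems"(1) k(1)] .
    have zB: "flip x k \<in> B_set L" using k(3) "0.prems"(2) in_B[OF z0] by auto
    have d: "\<delta>0 \<le> P L q x (flip x k)"
      unfolding P_def K_flip[OF k(1)] \<delta>0_def using R_le[OF q0 q1 L1 "0.prems"(1)] R_pos[OF q0 q1 L1 "0.prems"(1)] k(2) q0
      by (simp add: frac_le)
    have "SS L q (B_set L) (Suc 0) x \<le> 1 - \<delta>0 * 1"
      by (rule step_bound[OF "0.prems"(1) False z0 _ _ d]) (simp_all add: SS_0 zB)
    then show ?thesis by simp
  qed
next
  case (Suc j x)
  show ?case
  proof (cases "x \<in> B_set L")
    case True
    have "\<delta>0 ^ Suc (Suc j) \<le> 1" by (rule power_le_one) (use delta_pos in auto)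
    then show ?thesis using SS_B True by simp
  next
    case False
    then have xL: "\<not> x L" using in_B[OF Suc.prems(1)] by simp
    from good_neighbor[OF Suc.prems(1) xL] obtain k where k: "k \<in> {1..L}" "q \<le> rt q k x"
      "(flip x k) L \<or> mm L (flip x k) < mm L x" by blast
    have z0: "flip x k \<in> Omega L" using flip_in[OF Suc.prems(1) k(1)] .
    have d: "\<delta>0 \<le> P L q x (flip x k)"
      unfolding P_def K_flip[OF k(1)] \<delta>0_def using R_le[OF q0 q1 L1 Suc.prems(1)] R_pos[OF q0 q1 L1 Suc.prems(1)] k(2) q0
      by (simp add: frac_le)
    have s: "SS L q (B_set L) (Suc j) (flip x k) \<le> 1 - \<delta>0 ^ Suc j"
    proof (cases "(flip x k) L")
      case True
      then have "flip x k \<in> B_set L" using in_B[OF z0] by simp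
      moreover have "\<delta>0 ^ Suc j \<le> 1" by (rule power_le_one) (use delta_pos in auto)
      ultimately show ?thesis using SS_B by simp
    next
      case False
      then have "mm L (flip x k) \<le> j" using k(3) Suc.prems(2) by simp
      then show ?thesis using Suc.IH z0 by simp
    qed
    have "SS L q (B_set L) (Suc (Suc j)) x \<le> 1 - \<delta>0 * \<delta>0 ^ Suc j"
      by (rule step_bound[OF Suc.prems(1) False z0 s _ d]) (simp add: less_imp_le delta_pos)
    then show ?thesis by simp
  qed
qed

lemma mm_le: "mm L x \<le> L - 1"
proof -
  have "mm L x \<le> card {1..<L}" unfolding mm_def by (intro card_mono) auto
  then show ?thesis by simp
qed

definition "\<rho> = 1 - \<delta>0 ^ L"

lemma rho_bounds: "0 < \<rho>" "\<rho> < 1"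
proof -
  obtain L' where L': "L = Suc L'" using L1 by (cases L) auto
  have "\<delta>0 ^ Suc L' < 1" by (rule power_Suc_less_one) (use delta_pos in auto)
  then have "\<delta>0 ^ L < 1" using L' by simp
  moreover have "0 < \<delta>0 ^ L" using delta_pos by simp
  ultimately show "0 < \<rho>" "\<rho> < 1" unfolding \<rho>_def by auto
qed
  
lemma SS_L: "x \<in> Omega L \<Longrightarrow> SS L q (B_set L) L x \<le> \<rho>"
  using decay_aux[of x "L - 1"] mm_le[of x] L1 unfolding \<rho>_def by simp

lemma SS_geom: "x \<in> Omega L \<Longrightarrow> SS L q (B_set L) (j * L) x \<le> \<rho> ^ j"
proof (induction j arbitrary: x)
  case 0 then show ?case by (simp add: SS_le1[OF q0 q1 L1])
next
  case (Suc j)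
  have "SS L q (B_set L) (j * L + L) x \<le> \<rho> * SS L q (B_set L) (j * L) x"
    by (rule SS_submult[OF q0 q1 L1 SS_L Suc.prems])
  also have "\<dots> \<le> \<rho> * \<rho> ^ j" using Suc rho_bounds by (simp add: mult_left_mono)
  finally show ?case by (simp add: add.commute)
qed

definition "\<theta> = root L \<rho>"

lemma theta: "0 < \<theta>" "\<theta> < 1" "\<theta> ^ L = \<rho>"
  unfolding \<theta>_def using rho_bounds L1 by (auto simp: real_root_pow_pos)

lemma SS_exp: assumes x: "x \<in> Omega L" shows "SS L q (B_set L) n x \<le> \<theta> ^ n / \<rho>"
proof -
  have "SS L q (B_set L) n x \<le> SS L q (B_set L) (n div L * L) x"
    using SS_mono[OF q0 q1 L1 x, of _ "n div L * L" "n mod L"] by simp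
  also have "\<dots> \<le> \<rho> ^ (n div L)" by (rule SS_geom[OF x])
  also have "\<rho> ^ (n div L) * \<rho> \<le> \<theta> ^ n"
  proof -
    have "\<theta> ^ n = \<theta> ^ (L * (n div L)) * \<theta> ^ (n mod L)"
      by (simp add: power_add[symmetric])
    also have "\<theta> ^ (L * (n div L)) = \<rho> ^ (n div L)" by (simp add: power_mult theta)
    finally have e: "\<theta> ^ n = \<rho> ^ (n div L) * \<theta> ^ (n mod L)" .
    have g: "\<theta> ^ L \<le> \<theta> ^ (n mod L)"
      using theta L1 by (intro power_decreasing) (auto simp: less_imp_le)
    have "\<rho> ^ (n div L) * \<rho> = \<rho> ^ (n div L) * \<theta> ^ L" using theta by simp
    also have "\<dots> \<le> \<rho> ^ (n div L) * \<theta> ^ (n mod L)"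
      using g rho_bounds by (simp add: mult_left_mono)
    finally show ?thesis using e by simp
  qed
  then have "\<rho> ^ (n div L) \<le> \<theta> ^ n / \<rho>" using rho_bounds by (simp add: field_simps)
  finally show ?thesis .
qed

end


lemma summable_lin_geom:
  fixes \<theta> :: real assumes t: "0 < \<theta>" "\<theta> < 1"
  shows "summable (\<lambda>n. (real n + 1) * \<theta> ^ n)"
proof (rule summable_ratio_test[where c = "(1 + \<theta>) / 2" and N = "nat \<lceil>3 / (1 - \<theta>)\<rceil>"])
  show "(1 + \<theta>) / 2 < 1" using t by simp
  fix n assume n: "nat \<lceil>3 / (1 - \<theta>)\<rceil> \<le> n"
  then have "3 / (1 - \<theta>) \<le> real n" by linarith
  then have n3: "3 \<le> real n * (1 - \<theta>)" using t by (simp add: field_simps)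
  have n3': "3 \<le> real n - real n * \<theta>" using n3 by (simp add: algebra_simps)
  have a: "real n * \<theta> + 3 * \<theta> \<le> real n + 1" using n3' t by linarith
  have e1: "(real (Suc n) + 1) * \<theta> = real n * \<theta> + 2 * \<theta>" by (simp add: algebra_simps)
  have e2: "(1 + \<theta>) / 2 * (real n + 1) = (real n + 1 + real n * \<theta> + \<theta>) / 2" by (simp add: algebra_simps)
  have "2 * (real n * \<theta> + 2 * \<theta>) \<le> real n + 1 + real n * \<theta> + \<theta>" using a by (simp add: algebra_simps)
  then have "(real (Suc n) + 1) * \<theta> \<le> (1 + \<theta>) / 2 * (real n + 1)"
    unfolding e1 e2 by (simp add: field_simps)
  then have "(real (Suc n) + 1) * \<theta> * \<theta> ^ n \<le> (1 + \<theta>) / 2 * (real n + 1) * \<theta> ^ n"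
    using t by (intro mult_right_mono) auto
  moreover have "norm ((real (Suc n) + 1) * \<theta> ^ Suc n) = (real (Suc n) + 1) * \<theta> * \<theta> ^ n"
    using t by (simp add: abs_mult)
  moreover have "norm ((real n + 1) * \<theta> ^ n) = (real n + 1) * \<theta> ^ n"
    using t by (simp add: abs_mult)
  ultimately show "norm ((real (Suc n) + 1) * \<theta> ^ Suc n) \<le> (1 + \<theta>) / 2 * norm ((real n + 1) * \<theta> ^ n)"
    by (simp only: mult.assoc)
qed

context
  fixes L :: nat and q :: real
  assumes q0: "0 < q" and q1: "q < 1/2" and L1: "1 \<le> L"
begin

lemma HH_B: "x \<in> B \<Longrightarrow> HH L q B n x = 0"
  by (cases n) (simp_all add: HH_0 HH_Suc)
lemma WW_B: "x \<in> B \<Longrightarrow> WW L q B n x = 0"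
  by (cases n) (simp_all add: WW_0 WW_Suc HH_B)

lemma SS_lim: assumes x: "x \<in> Omega L" shows "(\<lambda>n. SS L q (B_set L) n x) \<longlonglongrightarrow> 0"
proof (rule real_tendsto_sandwich[where f = "\<lambda>_. 0" and h = "\<lambda>n. \<theta> L q ^ n / \<rho> L q"])
  show "\<forall>\<^sub>F n in sequentially. 0 \<le> SS L q (B_set L) n x" by (simp add: SS_nonneg[OF q0 q1 L1])
  show "\<forall>\<^sub>F n in sequentially. SS L q (B_set L) n x \<le> \<theta> L q ^ n / \<rho> L q"
    using SS_exp[OF q0 q1 L1 x] by simp
  show "(\<lambda>n. \<theta> L q ^ n / \<rho> L q) \<longlonglongrightarrow> 0"
    using theta[OF q0 q1 L1] by (intro tendsto_divide_zero LIMSEQ_power_zero) simp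
qed (rule tendsto_const)

lemma HH_sums: assumes x: "x \<in> Omega L" shows "(\<lambda>n. HH L q (B_set L) n x) sums SS L q (B_set L) 0 x"
proof -
  have "(\<lambda>n. SS L q (B_set L) n x - SS L q (B_set L) (Suc n) x) sums (SS L q (B_set L) 0 x - 0)"
    by (rule telescope_sums'[OF SS_lim[OF x]])
  moreover have "(\<lambda>n. SS L q (B_set L) n x - SS L q (B_set L) (Suc n) x) = (\<lambda>n. HH L q (B_set L) n x)"
    using HH_SS[OF q0 q1 L1 x] by (simp add: fun_eq_iff algebra_simps)
  ultimately show ?thesis by simp
qed

lemma WW_bound: "x \<in> Omega L \<Longrightarrow> WW L q B n x \<le> (real n + 1) / q * HH L q B n x"
proof (induction n arbitrary: x)
  case 0
  have "HH L q B 0 x / R L q x \<le> HH L q B 0 x / q"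
    by (rule divide_left_mono) (use R_ge[OF q0 q1 L1 0] q0 HH_nonneg[OF q0 q1 L1] in auto)
  then show ?case by (simp add: WW_0)
next
  case (Suc n)
  have u: "1 / R L q x \<le> 1 / q" using R_ge[OF q0 q1 L1 Suc.prems] q0 by (simp add: frac_le)
  show ?case
  proof (cases "x \<in> B")
    case True then show ?thesis by (simp add: WW_B HH_B)
  next
    case False
    have "WW L q B (Suc n) x = 1 / R L q x * HH L q B (Suc n) x + (\<Sum>z\<in>Omega L. P L q x z * WW L q B n z)"
      using False by (simp add: WW_Suc)
    also have "\<dots> \<le> 1 / q * HH L q B (Suc n) x + (\<Sum>z\<in>Omega L. P L q x z * ((real n + 1) / q * HH L q B n z))"
      using Suc.IH u by (intro add_mono sum_mono mult_left_mono mult_right_mono) (auto simp: Pnn[OF q0 q1 L1] HH_nonneg[OF q0 q1 L1])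
    also have "(\<Sum>z\<in>Omega L. P L q x z * ((real n + 1) / q * HH L q B n z)) = (real n + 1) / q * HH L q B (Suc n) x"
      using False by (simp add: HH_Suc sum_distrib_left mult.left_commute)
    also have "1 / q * HH L q B (Suc n) x + (real n + 1) / q * HH L q B (Suc n) x = (1 / q + (real n + 1) / q) * HH L q B (Suc n) x"
      by (simp only: distrib_right)
    also have "1 / q + (real n + 1) / q = (real (Suc n) + 1) / q"
      by (simp add: add_divide_distrib[symmetric])
    finally show ?thesis .
  qed
qed

lemma WW_summable: assumes x: "x \<in> Omega L" shows "summable (\<lambda>n. WW L q (B_set L) n x)"
proof (rule summable_comparison_test'[where N = 0])
  show "summable (\<lambda>n. (real n + 1) * \<theta> L q ^ n * (1 / (q * \<rho> L q)))"
    by (intro summable_mult2 summable_lin_geom theta[OF q0 q1 L1])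
  fix n
  have "WW L q (B_set L) n x \<le> (real n + 1) / q * HH L q (B_set L) n x" by (rule WW_bound[OF x])
  also have "\<dots> \<le> (real n + 1) / q * (\<theta> L q ^ n / \<rho> L q)"
    using HH_le_SS[OF q0 q1 L1 x] SS_exp[OF q0 q1 L1 x] q0
    by (intro mult_left_mono) (auto intro: order_trans)
  finally show "norm (WW L q (B_set L) n x) \<le> (real n + 1) * \<theta> L q ^ n * (1 / (q * \<rho> L q))"
    using WW_nonneg[OF q0 q1 L1] by (simp add: field_simps)
qed

lemma w_eq: assumes x: "x \<in> Omega L" and xB: "x \<notin> B_set L"
  shows "(\<Sum>n. WW L q (B_set L) n x) = 1 / R L q x + (\<Sum>z\<in>Omega L. P L q x z * (\<Sum>n. WW L q (B_set L) n z))"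
proof -
  let ?B = "B_set L"
  have sH: "summable (\<lambda>n. HH L q ?B n x)" using HH_sums[OF x] by (rule sums_summable)
  have H1: "(\<Sum>n. HH L q ?B n x) = 1" using HH_sums[OF x] xB by (simp add: sums_iff SS_0)
  have sHs: "summable (\<lambda>n. HH L q ?B (Suc n) x)" using summable_Suc_iff[of "\<lambda>n. HH L q ?B n x"] sH by simp
  have "(\<Sum>n. WW L q ?B (Suc n) x) = (\<Sum>n. 1 / R L q x * HH L q ?B (Suc n) x + (\<Sum>z\<in>Omega L. P L q x z * WW L q ?B n z))"
    using xB by (simp add: WW_Suc)
  also have "\<dots> = (\<Sum>n. 1 / R L q x * HH L q ?B (Suc n) x) + (\<Sum>n. \<Sum>z\<in>Omega L. P L q x z * WW L q ?B n z)"
    by (rule suminf_add[symmetric]) (auto intro!: summable_mult sHs summable_sum WW_summable)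
  also have "(\<Sum>n. 1 / R L q x * HH L q ?B (Suc n) x) = 1 / R L q x * (\<Sum>n. HH L q ?B (Suc n) x)"
    by (rule suminf_mult[OF sHs])
  also have "(\<Sum>n. HH L q ?B (Suc n) x) = 1 - HH L q ?B 0 x"
    using suminf_split_head[OF sH] H1 by simp
  also have "(\<Sum>n. \<Sum>z\<in>Omega L. P L q x z * WW L q ?B n z) = (\<Sum>z\<in>Omega L. P L q x z * (\<Sum>n. WW L q ?B n z))"
    by (subst suminf_sum) (auto intro!: summable_mult WW_summable sum.cong suminf_mult)
  finally have "(\<Sum>n. WW L q ?B (Suc n) x) = 1 / R L q x * (1 - HH L q ?B 0 x) + (\<Sum>z\<in>Omega L. P L q x z * (\<Sum>n. WW L q ?B n z))" .
  moreover have "(\<Sum>n. WW L q ?B (Suc n) x) = (\<Sum>n. WW L q ?B n x) - WW L q ?B 0 x"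
    by (rule suminf_split_head[OF WW_summable[OF x]])
  ultimately show ?thesis by (simp add: WW_0 algebra_simps)
qed

lemma EE_Suc': "EE L q A B (Suc n) x = (\<Sum>z\<in>Omega L. (if z \<in> A \<union> B then 0 else P L q x z) * EE L q A B n z)"
  unfolding EE_Suc by (intro sum.cong refl) simp

lemma EE_partial: "x \<in> Omega L \<Longrightarrow> (\<Sum>n<N. EE L q A B n x) \<le> 1"
proof (induction N arbitrary: x)
  case 0 then show ?case by simp
next
  case (Suc N)
  let ?c = "\<lambda>z. if z \<in> A \<union> B then 0 else P L q x z"
  have "(\<Sum>n<Suc N. EE L q A B n x) = EE L q A B 0 x + (\<Sum>n<N. EE L q A B (Suc n) x)"
    by (rule sum.lessThan_Suc_shift)
  also have "(\<Sum>n<N. EE L q A B (Suc n) x) = (\<Sum>n<N. \<Sum>z\<in>Omega L. ?c z * EE L q A B n z)"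
    by (simp only: EE_Suc')
  also have "\<dots> = (\<Sum>z\<in>Omega L. ?c z * (\<Sum>n<N. EE L q A B n z))"
    by (subst sum.swap) (simp add: sum_distrib_left)
  also have "\<dots> \<le> (\<Sum>z\<in>Omega L. ?c z)"
    using Suc.IH by (intro sum_mono) (auto simp: Pnn[OF q0 q1 L1] mult_left_le)
  also have "EE L q A B 0 x + (\<Sum>z\<in>Omega L. ?c z) \<le> (\<Sum>z\<in>Omega L. P L q x z)"
    unfolding EE_0 sum.distrib[symmetric] by (intro sum_mono) (auto simp: Pnn[OF q0 q1 L1])
  finally show ?case using sumP[OF q0 q1 L1 Suc.prems] by simp
qed

lemma EE_summable: "x \<in> Omega L \<Longrightarrow> summable (\<lambda>n. EE L q A B n x)"
  by (rule summableI_nonneg_bounded[where x = 1]) (auto intro: EE_nonneg[OF q0 q1 L1] EE_partial)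

lemma esc_le1: "x \<in> Omega L \<Longrightarrow> escape_prob L q x A B \<le> 1"
  unfolding escape_EE by (rule suminf_le_const[OF EE_summable EE_partial])

lemma esc_nonneg: "x \<in> Omega L \<Longrightarrow> 0 \<le> escape_prob L q x A B"
  unfolding escape_EE by (intro suminf_nonneg EE_summable EE_nonneg[OF q0 q1 L1])

lemma esc_eq: assumes x: "x \<in> Omega L"
  shows "escape_prob L q x A B = (\<Sum>z\<in>Omega L. if z \<in> B then P L q x z else 0)
       + (\<Sum>z\<in>Omega L. (if z \<in> A \<union> B then 0 else P L q x z) * escape_prob L q z A B)"
proof -
  have s: "summable (\<lambda>n. EE L q A B n x)" by (rule EE_summable[OF x])
  have "(\<Sum>n. EE L q A B (Suc n) x) = (\<Sum>n. \<Sum>z\<in>Omega L. (if z \<in> A \<union> B then 0 else P L q x z) * EE L q A B n z)"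
    by (simp only: EE_Suc')
  also have "\<dots> = (\<Sum>z\<in>Omega L. (if z \<in> A \<union> B then 0 else P L q x z) * escape_prob L q z A B)"
    unfolding escape_EE by (subst suminf_sum) (auto intro!: summable_mult EE_summable sum.cong suminf_mult)
  finally show ?thesis using suminf_split_head[OF s] unfolding escape_EE by (simp add: EE_0)
qed

end


lemma symm_L:
  fixes f g :: "config \<Rightarrow> real"
  shows "(\<Sum>x\<in>Omega L. pi_east L q x * f x * (R L q x * g x - (\<Sum>y\<in>Omega L. K L q x y * g y)))
       = (\<Sum>x\<in>Omega L. pi_east L q x * g x * (R L q x * f x - (\<Sum>y\<in>Omega L. K L q x y * f y)))"
proof -
  have cross: "(\<Sum>x\<in>Omega L. pi_east L q x * f x * (\<Sum>y\<in>Omega L. K L q x y * g y))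
       = (\<Sum>x\<in>Omega L. pi_east L q x * g x * (\<Sum>y\<in>Omega L. K L q x y * f y))"
  proof -
    have "(\<Sum>x\<in>Omega L. pi_east L q x * f x * (\<Sum>y\<in>Omega L. K L q x y * g y))
        = (\<Sum>x\<in>Omega L. \<Sum>y\<in>Omega L. (pi_east L q x * K L q x y) * (f x * g y))"
      by (simp add: sum_distrib_left mult_ac)
    also have "\<dots> = (\<Sum>x\<in>Omega L. \<Sum>y\<in>Omega L. (pi_east L q y * K L q y x) * (f x * g y))"
      by (simp add: detailed_balance)
    also have "\<dots> = (\<Sum>y\<in>Omega L. \<Sum>x\<in>Omega L. (pi_east L q y * K L q y x) * (f x * g y))"
      by (rule sum.swap)
    also have "\<dots> = (\<Sum>x\<in>Omega L. pi_east L q x * g x * (\<Sum>y\<in>Omega L. K L q x y * f y))"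
      by (simp add: sum_distrib_left mult_ac)
    finally show ?thesis .
  qed
  have "(\<Sum>x\<in>Omega L. pi_east L q x * f x * (R L q x * g x - (\<Sum>y\<in>Omega L. K L q x y * g y)))
      = (\<Sum>x\<in>Omega L. pi_east L q x * f x * R L q x * g x) - (\<Sum>x\<in>Omega L. pi_east L q x * f x * (\<Sum>y\<in>Omega L. K L q x y * g y))"
    by (simp add: right_diff_distrib sum_subtractf mult_ac)
  also have "\<dots> = (\<Sum>x\<in>Omega L. pi_east L q x * g x * R L q x * f x) - (\<Sum>x\<in>Omega L. pi_east L q x * g x * (\<Sum>y\<in>Omega L. K L q x y * f y))"
    unfolding cross by (simp add: mult_ac)
  also have "\<dots> = (\<Sum>x\<in>Omega L. pi_east L q x * g x * (R L q x * f x - (\<Sum>y\<in>Omega L. K L q x y * f y)))"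
    by (simp add: right_diff_distrib sum_subtractf mult_ac)
  finally show ?thesis .
qed

lemma one_zero_in: "one_zero L \<in> Omega L"
  unfolding Omega_def one_zero_def by auto

lemma one_zero_notB: "one_zero L \<notin> B_set L"
  unfolding B_set_def one_zero_def by auto

lemma pi_one_zero: "pi_east (Suc L') q (one_zero (Suc L')) = (1 - q) ^ L' * q"
proof -
  have "{1..Suc L'} = insert (Suc L') {1..L'}" by (auto)
  then have "pi_east (Suc L') q (one_zero (Suc L')) = q * (\<Prod>j\<in>{1..L'}. if one_zero (Suc L') j then 1 - q else q)"
    unfolding pi_east_def by (simp add: one_zero_def)
  also have "(\<Prod>j\<in>{1..L'}. if one_zero (Suc L') j then 1 - q else q) = (\<Prod>j\<in>{1..L'}. 1 - q)"
    by (intro prod.cong refl) (auto simp: one_zero_def)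
  finally show ?thesis by simp
qed

context
  fixes L :: nat and q :: real
  assumes q0: "0 < q" and q1: "q < 1/2" and L1: "1 \<le> L"
begin

definition "hh x = (if x = one_zero L then 1 else if x \<in> B_set L then 0
   else 1 - escape_prob L q x {one_zero L} (B_set L))"

lemma hh_01: "x \<in> Omega L \<Longrightarrow> 0 \<le> hh x \<and> hh x \<le> 1"
  unfolding hh_def using esc_le1[OF q0 q1 L1] esc_nonneg[OF q0 q1 L1] by auto

lemma sumPh: assumes x: "x \<in> Omega L"
  shows "(\<Sum>y\<in>Omega L. P L q x y * hh y) = 1 - escape_prob L q x {one_zero L} (B_set L)"
proof -
  let ?a = "one_zero L" and ?B = "B_set L"
  let ?e = "\<lambda>y. escape_prob L q y {?a} ?B"
  have "(\<Sum>y\<in>Omega L. P L q x y * hh y) = (\<Sum>y\<in>Omega L. P L q x y - (if y \<in> ?B then P L q x y else 0)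
       - (if y \<in> {?a} \<union> ?B then 0 else P L q x y) * ?e y)"
    using one_zero_notB by (intro sum.cong refl) (auto simp: hh_def algebra_simps)
  also have "\<dots> = 1 - ?e x"
    using esc_eq[OF q0 q1 L1 x, of "{?a}" ?B] sumP[OF q0 q1 L1 x] by (simp add: sum_subtractf)
  finally show ?thesis .
qed

lemma sumK_eq: assumes x: "x \<in> Omega L"
  shows "(\<Sum>y\<in>Omega L. K L q x y * f y) = R L q x * (\<Sum>y\<in>Omega L. P L q x y * f y)"
proof -
  have "R L q x \<noteq> 0" using R_pos[OF q0 q1 L1 x] by simp
  then show ?thesis unfolding P_def by (simp add: sum_distrib_left)
qed

lemma Lh: assumes x: "x \<in> Omega L" and xB: "x \<notin> B_set L"
  shows "R L q x * hh x - (\<Sum>y\<in>Omega L. K L q x y * hh y)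
     = (if x = one_zero L then R L q x * escape_prob L q x {one_zero L} (B_set L) else 0)"
  using xB unfolding sumK_eq[OF x] sumPh[OF x] by (simp add: hh_def algebra_simps)

definition "ww x = exp_hit L q x (B_set L)"

lemma Lw: assumes x: "x \<in> Omega L" and xB: "x \<notin> B_set L"
  shows "R L q x * ww x - (\<Sum>y\<in>Omega L. K L q x y * ww y) = 1"
proof -
  have "ww x = 1 / R L q x + (\<Sum>y\<in>Omega L. P L q x y * ww y)"
    unfolding ww_def exp_hit_WW by (rule w_eq[OF q0 q1 L1 x xB])
  then show ?thesis unfolding sumK_eq[OF x] using R_pos[OF q0 q1 L1 x] by (simp add: algebra_simps)
qed

lemma ww_B: "x \<in> B_set L \<Longrightarrow> ww x = 0"
  unfolding ww_def exp_hit_WW by (simp add: WW_B[OF q0 q1 L1])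

lemma key_identity:
  "ww (one_zero L) * capacity L q {one_zero L} (B_set L)
     = (\<Sum>x\<in>Omega L. if x \<in> B_set L then 0 else pi_east L q x * hh x)"
proof -
  let ?a = "one_zero L"
  have "(\<Sum>x\<in>Omega L. pi_east L q x * hh x * (R L q x * ww x - (\<Sum>y\<in>Omega L. K L q x y * ww y)))
      = (\<Sum>x\<in>Omega L. if x \<in> B_set L then 0 else pi_east L q x * hh x)"
    by (intro sum.cong refl) (auto simp: Lw hh_def one_zero_notB)
  moreover have "(\<Sum>x\<in>Omega L. pi_east L q x * ww x * (R L q x * hh x - (\<Sum>y\<in>Omega L. K L q x y * hh y)))
      = (\<Sum>x\<in>Omega L. if x = ?a then pi_east L q ?a * ww ?a * (R L q ?a * escape_prob L q ?a {?a} (B_set L)) else 0)"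
    apply (intro sum.cong refl)
    subgoal for x by (cases "x \<in> B_set L") (auto simp: Lh ww_B one_zero_notB)
    done
  moreover have "\<dots> = pi_east L q ?a * ww ?a * (R L q ?a * escape_prob L q ?a {?a} (B_set L))"
    using one_zero_in by (simp add: finite_Omega)
  ultimately show ?thesis using symm_L[of L q hh ww] unfolding capacity_def by (simp add: mult_ac)
qed

end


lemma pi_nonneg: "0 \<le> q \<Longrightarrow> q \<le> 1 \<Longrightarrow> 0 \<le> pi_east L q x"
  unfolding pi_east_def by (intro prod_nonneg) auto

lemma bounds:
  assumes q0: "0 < q" and q1: "q < 1/2" and L1: "1 \<le> L"
  shows "pi_east L q (one_zero L) \<le> T_hit L q * capacity L q {one_zero L} (B_set L)"
    and "T_hit L q * capacity L q {one_zero L} (B_set L) \<le> q"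
    and "0 \<le> capacity L q {one_zero L} (B_set L)"
proof -
  let ?a = "one_zero L"
  have T: "T_hit L q = ww L q ?a" unfolding T_hit_def ww_def[OF q0 q1 L1] ..
  have KI: "T_hit L q * capacity L q {?a} (B_set L) = (\<Sum>x\<in>Omega L. if x \<in> B_set L then 0 else pi_east L q x * hh L q x)"
    unfolding T by (rule key_identity[OF q0 q1 L1])
  have pnn: "\<And>x. 0 \<le> pi_east L q x" using pi_nonneg q0 q1 by simp
  have "pi_east L q ?a = (if ?a \<in> B_set L then 0 else pi_east L q ?a * hh L q ?a)"
    using one_zero_notB by (simp add: hh_def[OF q0 q1 L1])
  also have "\<dots> \<le> (\<Sum>x\<in>Omega L. if x \<in> B_set L then 0 else pi_east L q x * hh L q x)"
    using hh_01[OF q0 q1 L1] pnn by (intro member_le_sum) (auto simp: finite_Omega one_zero_in)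
  finally show "pi_east L q ?a \<le> T_hit L q * capacity L q {?a} (B_set L)" using KI by simp
  obtain L' where L': "L = Suc L'" using L1 by (cases L) auto
  have "(\<Sum>x\<in>Omega L. if x \<in> B_set L then 0 else pi_east L q x * hh L q x)
      \<le> (\<Sum>x\<in>Omega L. if x L then 0 else pi_east L q x)"
    using hh_01[OF q0 q1 L1] pnn by (intro sum_mono) (auto simp: in_B mult_left_le)
  also have "\<dots> = q" unfolding L' by (rule pi_D)
  finally show "T_hit L q * capacity L q {?a} (B_set L) \<le> q" using KI by simp
  show "0 \<le> capacity L q {?a} (B_set L)"
    unfolding capacity_def using pnn R_nonneg[of q L ?a] esc_nonneg[OF q0 q1 L1 one_zero_in] q0 q1
    by simp
qed

lemma p_pow_bound:
  assumes q0: "0 < q" and q1: "q < 1/2" and n: "real n * q \<le> 1"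
  shows "exp (-2) \<le> (1 - q) ^ n"
proof -
  have "- q - 2 * q^2 \<le> ln (1 - q)" using ln_one_minus_pos_lower_bound[of q] q0 q1 by simp
  moreover have "2 * q^2 \<le> q" using q0 q1 by (simp add: power2_eq_square)
  ultimately have l: "-2 * q \<le> ln (1 - q)" by simp
  have "ln ((1 - q) ^ n) = real n * ln (1 - q)" using q1 by (simp add: ln_realpow)
  also have "\<dots> \<ge> real n * (-2 * q)" by (rule mult_left_mono[OF l]) simp
  finally have "-2 \<le> ln ((1 - q) ^ n)" using n by simp
  then have "exp (-2) \<le> exp (ln ((1 - q) ^ n))" by simp
  then show ?thesis using q1 by simp
qed

theorem mainTheorem16:
  shows "\<exists>c>0. \<forall>(q::real) (\<gamma>::real) (L::nat).
           0 < q \<longrightarrow> q < 1/2 \<longrightarrow> 0 < \<gamma> \<longrightarrow> \<gamma> \<le> 1 \<longrightarrow>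
           L = nat \<lfloor>1 / q powr \<gamma>\<rfloor> \<longrightarrow>
           c * q / capacity L q {one_zero L} (B_set L) \<le> T_hit L q \<and>
           T_hit L q \<le> q / capacity L q {one_zero L} (B_set L)"
proof (intro exI[of _ "exp (-2)"] conjI allI impI)
  show "0 < exp (-2::real)" by simp
  fix q \<gamma> :: real and L :: nat
  assume q0: "0 < q" and q1: "q < 1/2" and g0: "0 < \<gamma>" and g1: "\<gamma> \<le> 1"
    and Ld: "L = nat \<lfloor>1 / q powr \<gamma>\<rfloor>"
  have "ln q < 0" using q0 q1 by simp
  then have "\<gamma> * ln q < 0" using g0 by (simp add: mult_pos_neg)
  then have qg1: "q powr \<gamma> < 1" using q0 by (simp add: powr_def)
  have qgpos: "0 < q powr \<gamma>" using q0 by simp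
  have "q powr 1 \<le> q powr \<gamma>" using g1 q0 q1 by (intro powr_mono') auto
  then have qleg: "q \<le> q powr \<gamma>" using q0 by simp
  have big: "1 < 1 / q powr \<gamma>" using qg1 qgpos by simp
  have L1: "1 \<le> L" unfolding Ld using big by linarith
  have "real L \<le> 1 / q powr \<gamma>" unfolding Ld using big by linarith
  also have "\<dots> \<le> 1 / q" using qleg q0 by (simp add: frac_le)
  finally have Lq: "real L * q \<le> 1" using q0 by (simp add: field_simps)
  obtain L' where L': "L = Suc L'" using L1 by (cases L) auto
  have "real L' * q \<le> 1" using Lq q0 L' by (simp add: algebra_simps)
  then have pp: "exp (-2) \<le> (1 - q) ^ L'" by (rule p_pow_bound[OF q0 q1])
  have pia: "pi_east L q (one_zero L) = (1 - q) ^ L' * q" unfolding L' by (rule pi_one_zero)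
  let ?C = "capacity L q {one_zero L} (B_set L)"
  have b1: "pi_east L q (one_zero L) \<le> T_hit L q * ?C" by (rule bounds(1)[OF q0 q1 L1])
  have b2: "T_hit L q * ?C \<le> q" by (rule bounds(2)[OF q0 q1 L1])
  have b3: "0 \<le> ?C" by (rule bounds(3)[OF q0 q1 L1])
  have low: "exp (-2) * q \<le> T_hit L q * ?C"
    using pp q0 pia b1 by (metis mult_right_mono less_imp_le order_trans)
  have "0 < exp (-2) * q" using q0 by simp
  then have Cpos: "0 < ?C" using low b3 by (cases "?C = 0") auto
  show "exp (-2) * q / ?C \<le> T_hit L q" using low Cpos by (simp add: pos_divide_le_eq)
  show "T_hit L q \<le> q / ?C" using b2 Cpos by (simp add: pos_le_divide_eq)
qed

end
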